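(* Let $\alpha\in(0,1]$, let $J$ be a real symmetric $n\times n$ matrix with $J_{ii}=0$ and $\|J\|_{1\to1}=\max_i\sum_j|J_{ij}|\le1-\alpha$, let $h\in\mathbb{R}^n$, and let $q^n$ be the Ising measure on $\{-1,+1\}^n$ proportional to $\exp(\frac12\sum_{i,j}J_{ij}\sigma_i\sigma_j+\sum_ih_i\sigma_i)$. Then the coupling matrix $A$ of $q^n$ satisfies $\|A\|_{2\to2}\le\|J\|_{1\to1}\le1-\alpha$. Moreover, if $\|h\|_\infty\le\tilde\alpha$ for some $\tilde\alpha\ge0$, then there exist $c_{\alpha,\tilde\alpha},C_{\alpha,\tilde\alpha}>0$ depending only on $\alpha$ and $\tilde\alpha$ such that $q_i(s\mid\overline{\sigma_i})\in(c_{\alpha,\tilde\alpha},1-C_{\alpha,\tilde\alpha})$ for all $s\in\{-1,+1\}$, all $i$, all $n$ and all $\overline{\sigma_i}$.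
   Context: For $\sigma\in\{-1,+1\}^n$, $\overline{\sigma_i}=(\sigma_j)_{j\ne i}$ and $q_i(\cdot\mid\overline{\sigma_i})$ is the conditional law of the $i$-th spin given $\overline{\sigma_i}$ under $q^n$. The coupling matrix $A=(A_{ik})$ is defined by $A_{ii}=0$ and, for $i\ne k$, $A_{ik}=\sup\{d_{TV}(q_i(\cdot\mid\overline{x_i}),q_i(\cdot\mid\overline{z_i})):x,z\in\{-1,+1\}^n,\ \overline{x_k}=\overline{z_k}\}$, where $d_{TV}$ is total variation distance. $\|A\|_{2\to2}$ is the Euclidean operator norm. *)

theory Defs
  imports "HOL-Analysis.Analysis"
begin

text \<open>Spin configurations on n sites: sites are 0..n-1, spins are real numbers
  in {-1,+1}; components outside the sites are fixed to 0 so the set is finite.\<close>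
definition configs :: "nat \<Rightarrow> (nat \<Rightarrow> real) set" where
  "configs n = {\<sigma>. (\<forall>i<n. \<sigma> i = 1 \<or> \<sigma> i = -1) \<and> (\<forall>i\<ge>n. \<sigma> i = 0)}"

definition ising_weight :: "nat \<Rightarrow> (nat \<Rightarrow> nat \<Rightarrow> real) \<Rightarrow> (nat \<Rightarrow> real) \<Rightarrow> (nat \<Rightarrow> real) \<Rightarrow> real" where
  "ising_weight n J h \<sigma> =
     exp ((1/2) * (\<Sum>i<n. \<Sum>j<n. J i j * \<sigma> i * \<sigma> j) + (\<Sum>i<n. h i * \<sigma> i))"

definition ising_prob :: "nat \<Rightarrow> (nat \<Rightarrow> nat \<Rightarrow> real) \<Rightarrow> (nat \<Rightarrow> real) \<Rightarrow> (nat \<Rightarrow> real) \<Rightarrow> real" where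
  "ising_prob n J h \<sigma> = ising_weight n J h \<sigma> / (\<Sum>\<tau>\<in>configs n. ising_weight n J h \<tau>)"

text \<open>Conditional law q_i(s | overline sigma_i): probability of the configuration
  with spin s at site i and the other spins of sigma, divided by the probability
  of the event that all spins other than i agree with sigma.\<close>
definition cond_law :: "nat \<Rightarrow> (nat \<Rightarrow> nat \<Rightarrow> real) \<Rightarrow> (nat \<Rightarrow> real) \<Rightarrow> nat \<Rightarrow> (nat \<Rightarrow> real) \<Rightarrow> real \<Rightarrow> real" where
  "cond_law n J h i \<sigma> s =
     ising_prob n J h (\<sigma>(i := s)) /
     (ising_prob n J h (\<sigma>(i := 1)) + ising_prob n J h (\<sigma>(i := -1)))"

definition dTV_pm :: "(real \<Rightarrow> real) \<Rightarrow> (real \<Rightarrow> real) \<Rightarrow> real" where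
  "dTV_pm p q = (1/2) * (\<bar>p 1 - q 1\<bar> + \<bar>p (-1) - q (-1)\<bar>)"

definition coupling :: "nat \<Rightarrow> (nat \<Rightarrow> nat \<Rightarrow> real) \<Rightarrow> (nat \<Rightarrow> real) \<Rightarrow> nat \<Rightarrow> nat \<Rightarrow> real" where
  "coupling n J h i k =
     (if i = k then 0 else
      Sup {dTV_pm (cond_law n J h i x) (cond_law n J h i z) | x z.
             x \<in> configs n \<and> z \<in> configs n \<and> (\<forall>j. j \<noteq> k \<longrightarrow> x j = z j)})"

definition opnorm22 :: "nat \<Rightarrow> (nat \<Rightarrow> nat \<Rightarrow> real) \<Rightarrow> real" where
  "opnorm22 n A = Sup {sqrt (\<Sum>i<n. (\<Sum>k<n. A i k * x k)^2) | x. (\<Sum>k<n. (x k)^2) \<le> 1}"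

definition norm11 :: "nat \<Rightarrow> (nat \<Rightarrow> nat \<Rightarrow> real) \<Rightarrow> real" where
  "norm11 n J = Max ({0} \<union> {(\<Sum>j<n. \<bar>J i j\<bar>) | i. i < n})"

end

theory Submission
  imports Defs
begin

lemma configs_Suc_sub:
  "configs (Suc n) \<subseteq> (\<lambda>(\<sigma>, b). \<sigma>(n := b)) ` (configs n \<times> {1, -1})"
proof
  fix \<sigma> assume a: "\<sigma> \<in> configs (Suc n)"
  have "\<sigma>(n := 0) \<in> configs n" using a unfolding configs_def by auto
  moreover have "\<sigma> n \<in> {1, -1}" using a unfolding configs_def by auto
  moreover have "\<sigma> = (\<sigma>(n := 0))(n := \<sigma> n)" by simp
  ultimately show "\<sigma> \<in> (\<lambda>(\<sigma>, b). \<sigma>(n := b)) ` (configs n \<times> {1, -1})"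
    by (intro image_eqI[where x="(\<sigma>(n:=0), \<sigma> n)"]) auto
qed

lemma configs_finite: "finite (configs n)"
proof (induction n)
  case 0
  have "configs 0 \<subseteq> {\<lambda>_. 0}" unfolding configs_def by auto
  then show ?case using finite_subset by blast
next
  case (Suc n)
  then show ?case using configs_Suc_sub finite_subset by blast
qed

lemma configs_ne: "(\<lambda>j. if j < n then 1 else 0) \<in> configs n"
  unfolding configs_def by auto

lemma Z_pos: "(\<Sum>\<tau>\<in>configs n. ising_weight n J h \<tau>) > 0"
  using configs_finite configs_ne
  by (intro sum_pos) (auto simp: ising_weight_def)

lemma configs_abs: "\<sigma> \<in> configs n \<Longrightarrow> \<bar>\<sigma> j\<bar> \<le> 1"
  unfolding configs_def by (cases "j < n") auto

definition mf :: "nat \<Rightarrow> (nat \<Rightarrow> nat \<Rightarrow> real) \<Rightarrow> (nat \<Rightarrow> real) \<Rightarrow> nat \<Rightarrow> (nat \<Rightarrow> real) \<Rightarrow> real" where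
  "mf n J h i \<sigma> = (\<Sum>b\<in>{..<n}-{i}. J i b * \<sigma> b) + h i"

lemma quad_split:
  fixes J :: "nat \<Rightarrow> nat \<Rightarrow> real"
  assumes "i < n" "J i i = 0" "\<And>b. b < n \<Longrightarrow> J b i = J i b"
  shows "(\<Sum>a<n. \<Sum>b<n. J a b * (\<sigma>(i:=s)) a * (\<sigma>(i:=s)) b) =
     (\<Sum>a\<in>{..<n}-{i}. \<Sum>b\<in>{..<n}-{i}. J a b * \<sigma> a * \<sigma> b) + 2 * s * (\<Sum>b\<in>{..<n}-{i}. J i b * \<sigma> b)"
proof -
  have fi: "finite {..<n}" "i \<in> {..<n}" using assms(1) by auto
  define t where "t = \<sigma>(i:=s)"
  have ti: "t i = s" and tb: "\<And>b. b \<noteq> i \<Longrightarrow> t b = \<sigma> b" unfolding t_def by auto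
  have row: "(\<Sum>b<n. J a b * t a * t b) = J a i * t a * s + (\<Sum>b\<in>{..<n}-{i}. J a b * t a * \<sigma> b)" for a
  proof -
    have "(\<Sum>b<n. J a b * t a * t b) = J a i * t a * t i + (\<Sum>b\<in>{..<n}-{i}. J a b * t a * t b)"
      by (rule sum.remove[OF fi])
    also have "(\<Sum>b\<in>{..<n}-{i}. J a b * t a * t b) = (\<Sum>b\<in>{..<n}-{i}. J a b * t a * \<sigma> b)"
      by (rule sum.cong) (simp_all add: tb)
    finally show ?thesis by (simp only: ti)
  qed
  have "(\<Sum>a<n. \<Sum>b<n. J a b * t a * t b) = (\<Sum>b<n. J i b * t i * t b) + (\<Sum>a\<in>{..<n}-{i}. \<Sum>b<n. J a b * t a * t b)"
    by (rule sum.remove[OF fi])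
  also have "(\<Sum>b<n. J i b * t i * t b) = s * (\<Sum>b\<in>{..<n}-{i}. J i b * \<sigma> b)"
    unfolding row[of i] by (simp add: ti assms(2) sum_distrib_left mult.left_commute mult.commute)
  also have "(\<Sum>a\<in>{..<n}-{i}. \<Sum>b<n. J a b * t a * t b) =
      (\<Sum>a\<in>{..<n}-{i}. J a i * \<sigma> a * s + (\<Sum>b\<in>{..<n}-{i}. J a b * \<sigma> a * \<sigma> b))"
    by (rule sum.cong[OF refl], subst row, simp add: tb)
  also have "\<dots> = (\<Sum>a\<in>{..<n}-{i}. J a i * \<sigma> a * s) + (\<Sum>a\<in>{..<n}-{i}. \<Sum>b\<in>{..<n}-{i}. J a b * \<sigma> a * \<sigma> b)"
    by (rule sum.distrib)
  also have "(\<Sum>a\<in>{..<n}-{i}. J a i * \<sigma> a * s) = s * (\<Sum>b\<in>{..<n}-{i}. J i b * \<sigma> b)"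
    unfolding sum_distrib_left by (rule sum.cong) (simp_all add: assms(3))
  finally show ?thesis unfolding t_def by simp
qed

lemma lin_split:
  fixes h :: "nat \<Rightarrow> real"
  assumes "i < n"
  shows "(\<Sum>a<n. h a * (\<sigma>(i:=s)) a) = h i * s + (\<Sum>a\<in>{..<n}-{i}. h a * \<sigma> a)"
proof -
  have fi: "finite {..<n}" "i \<in> {..<n}" using assms by auto
  show ?thesis using sum.remove[OF fi, of "\<lambda>a. h a * (\<sigma>(i:=s)) a"] by (auto intro!: sum.cong)
qed

lemma weight_split:
  assumes "i < n" "J i i = 0" "\<And>b. b < n \<Longrightarrow> J b i = J i b"
  shows "\<exists>B. \<forall>s. ising_weight n J h (\<sigma>(i:=s)) = exp B * exp (s * mf n J h i \<sigma>)"
proof -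
  define B where "B = (1/2) * (\<Sum>a\<in>{..<n}-{i}. \<Sum>b\<in>{..<n}-{i}. J a b * \<sigma> a * \<sigma> b) + (\<Sum>a\<in>{..<n}-{i}. h a * \<sigma> a)"
  have H: "ising_weight n J h (\<sigma>(i:=s)) = exp B * exp (s * mf n J h i \<sigma>)" for s
  proof -
    have q: "(\<Sum>a<n. \<Sum>b<n. J a b * (\<sigma>(i:=s)) a * (\<sigma>(i:=s)) b) =
     (\<Sum>a\<in>{..<n}-{i}. \<Sum>b\<in>{..<n}-{i}. J a b * \<sigma> a * \<sigma> b) + 2 * s * (\<Sum>b\<in>{..<n}-{i}. J i b * \<sigma> b)"
      by (rule quad_split[of i n J \<sigma> s, OF assms(1) assms(2) assms(3)])
    have l: "(\<Sum>a<n. h a * (\<sigma>(i:=s)) a) = h i * s + (\<Sum>a\<in>{..<n}-{i}. h a * \<sigma> a)"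
      by (rule lin_split[of i n h \<sigma> s, OF assms(1)])
    define Q where "Q = (\<Sum>a\<in>{..<n}-{i}. \<Sum>b\<in>{..<n}-{i}. J a b * \<sigma> a * \<sigma> b)"
    define M where "M = (\<Sum>b\<in>{..<n}-{i}. J i b * \<sigma> b)"
    define L where "L = (\<Sum>a\<in>{..<n}-{i}. h a * \<sigma> a)"
    have e: "(1/2) * (Q + 2 * s * M) + (h i * s + L) = ((1/2) * Q + L) + s * (M + h i)"
      by (simp add: algebra_simps)
    show ?thesis unfolding ising_weight_def q l
      unfolding Q_def[symmetric] M_def[symmetric] L_def[symmetric] e exp_add
      by (simp add: B_def mf_def M_def Q_def L_def exp_add)
  qed
  show ?thesis by (rule exI[of _ B], rule allI, rule H)
qed

lemma cond_law_eq:
  assumes "i < n" "J i i = 0" "\<And>b. b < n \<Longrightarrow> J b i = J i b"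
  shows "cond_law n J h i \<sigma> s = exp (s * mf n J h i \<sigma>) / (exp (mf n J h i \<sigma>) + exp (- mf n J h i \<sigma>))"
proof -
  obtain B where B: "\<And>s. ising_weight n J h (\<sigma>(i:=s)) = exp B * exp (s * mf n J h i \<sigma>)"
    using weight_split[of i n J h \<sigma>, OF assms(1) assms(2) assms(3)] by blast
  have Z: "(\<Sum>\<tau>\<in>configs n. ising_weight n J h \<tau>) > 0" by (rule Z_pos)
  have aux: "\<And>E Z a b c :: real. Z > 0 \<Longrightarrow> E > 0 \<Longrightarrow> (E*a/Z)/(E*b/Z + E*c/Z) = a/(b+c)"
  proof -
    fix E Z a b c :: real assume "Z > 0" "E > 0"
    have "E*b/Z + E*c/Z = (E/Z)*(b+c)" by (simp add: algebra_simps add_divide_distrib)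
    moreover have "E*a/Z = (E/Z)*a" by simp
    ultimately show "(E*a/Z)/(E*b/Z + E*c/Z) = a/(b+c)" using \<open>Z>0\<close> \<open>E>0\<close> by simp
  qed
  let ?m = "mf n J h i \<sigma>" and ?Z = "(\<Sum>\<tau>\<in>configs n. ising_weight n J h \<tau>)"
  have "cond_law n J h i \<sigma> s = (exp B * exp (s*?m) / ?Z) / (exp B * exp (1*?m) / ?Z + exp B * exp ((-1)*?m) / ?Z)"
    unfolding cond_law_def ising_prob_def by (simp only: B)
  also have "\<dots> = exp (s*?m) / (exp (1*?m) + exp((-1)*?m))" by (rule aux[OF Z]) simp
  finally show ?thesis by simp
qed

lemma tanh_lip_lt:
  fixes a b :: real assumes "a < b" shows "tanh b - tanh a \<le> b - a"
proof -
  have d: "\<And>x::real. DERIV tanh x :> 1 - tanh x ^ 2"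
  proof -
    fix x :: real
    have "cosh x \<noteq> 0" using cosh_real_pos[of x] by simp
    from has_field_derivative_tanh[of "\<lambda>x. x", OF this DERIV_ident] show "DERIV tanh x :> 1 - tanh x ^ 2" by simp
  qed
  have c: "continuous_on {a..b} tanh" by (intro continuous_intros) auto
  obtain l z where "a < z" "z < b" "DERIV tanh z :> l" "tanh b - tanh a = (b - a) * l"
    using MVT[OF assms c] d by (meson real_differentiable_def)
  moreover have "l = 1 - tanh z ^ 2" using DERIV_unique[OF d \<open>DERIV tanh z :> l\<close>] by simp
  ultimately show ?thesis using assms by (simp add: mult_left_le)
qed

lemma tanh_lip: fixes a b :: real shows "\<bar>tanh a - tanh b\<bar> \<le> \<bar>a - b\<bar>"
proof (cases a b rule: linorder_cases)
  case less then show ?thesis using tanh_lip_lt[OF less] by (simp add: abs_if) 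
next
  case greater then show ?thesis using tanh_lip_lt[OF greater] by (simp add: abs_if)
qed simp

lemma logi_p: "exp m / (exp m + exp (- m)) = (1 + tanh m) / 2" for m :: real
proof -
  have D: "exp m + exp (-m) > 0" by (simp add: add_pos_pos)
  show ?thesis unfolding tanh_altdef using D by (simp add: field_simps)
qed

lemma logi_m: "exp (- m) / (exp m + exp (- m)) = (1 - tanh m) / 2" for m :: real
proof -
  have D: "exp m + exp (-m) > 0" by (simp add: add_pos_pos)
  show ?thesis unfolding tanh_altdef using D by (simp add: field_simps)
qed

lemma mf_diff:
  assumes "k < n" "k \<noteq> i" "\<forall>j. j \<noteq> k \<longrightarrow> x j = z j"
  shows "mf n J h i x - mf n J h i z = J i k * (x k - z k)"
proof -
  have "mf n J h i x - mf n J h i z = (\<Sum>b\<in>{..<n}-{i}. J i b * (x b - z b))"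
    unfolding mf_def by (simp add: sum_subtractf[symmetric] algebra_simps)
  also have "\<dots> = (\<Sum>b\<in>{..<n}-{i}. if b = k then J i k * (x k - z k) else 0)"
    by (rule sum.cong[OF refl]) (use assms(3) in auto)
  also have "\<dots> = J i k * (x k - z k)" using assms(1,2) by simp
  finally show ?thesis .
qed

lemma dTV_bound:
  assumes "i < n" "J i i = 0" "\<And>b. b < n \<Longrightarrow> J b i = J i b"
    and "k < n" "k \<noteq> i" "x \<in> configs n" "z \<in> configs n" "\<forall>j. j \<noteq> k \<longrightarrow> x j = z j"
  shows "dTV_pm (cond_law n J h i x) (cond_law n J h i z) \<le> \<bar>J i k\<bar>"
proof -
  define mx where "mx = mf n J h i x"
  define mz where "mz = mf n J h i z"
  have cx: "cond_law n J h i x s = exp (s * mx) / (exp mx + exp (- mx))" for s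
    unfolding mx_def by (rule cond_law_eq[of i n J h, OF assms(1) assms(2) assms(3)])
  have cz: "cond_law n J h i z s = exp (s * mz) / (exp mz + exp (- mz))" for s
    unfolding mz_def by (rule cond_law_eq[of i n J h, OF assms(1) assms(2) assms(3)])
  have "dTV_pm (cond_law n J h i x) (cond_law n J h i z) =
     1/2 * (\<bar>(1 + tanh mx)/2 - (1 + tanh mz)/2\<bar> + \<bar>(1 - tanh mx)/2 - (1 - tanh mz)/2\<bar>)"
    unfolding dTV_pm_def cx cz by (simp only: mult_1 mult_minus1 logi_p logi_m)
  also have "\<dots> = \<bar>tanh mx - tanh mz\<bar> / 2" by (simp add: abs_if field_simps)
  also have "\<dots> \<le> \<bar>mx - mz\<bar> / 2" using tanh_lip[of mx mz] by simp
  also have "mx - mz = J i k * (x k - z k)" unfolding mx_def mz_def by (rule mf_diff[OF assms(4,5,8)])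
  also have "\<bar>J i k * (x k - z k)\<bar> / 2 \<le> \<bar>J i k\<bar>"
  proof -
    have "\<bar>x k - z k\<bar> \<le> 2" using configs_abs[OF assms(6), of k] configs_abs[OF assms(7), of k] by linarith
    then have "\<bar>J i k\<bar> * \<bar>x k - z k\<bar> \<le> \<bar>J i k\<bar> * 2" by (intro mult_left_mono) auto
    then show ?thesis by (simp add: abs_mult)
  qed
  finally show ?thesis .
qed

lemma row_CS:
  fixes A J :: "nat \<Rightarrow> real"
  assumes "\<And>k. k < n \<Longrightarrow> \<bar>A k\<bar> \<le> \<bar>J k\<bar>" "(\<Sum>k<n. \<bar>J k\<bar>) \<le> R"
  shows "(\<Sum>k<n. A k * x k)^2 \<le> R * (\<Sum>k<n. \<bar>J k\<bar> * (x k)^2)"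
proof -
  have "\<bar>\<Sum>k<n. A k * x k\<bar> \<le> (\<Sum>k<n. \<bar>A k * x k\<bar>)" by (rule sum_abs)
  also have "\<dots> \<le> (\<Sum>k<n. sqrt \<bar>J k\<bar> * (sqrt \<bar>J k\<bar> * \<bar>x k\<bar>))"
  proof (rule sum_mono)
    fix k assume "k \<in> {..<n}"
    then have le: "\<bar>A k\<bar> * \<bar>x k\<bar> \<le> \<bar>J k\<bar> * \<bar>x k\<bar>" using assms(1) by (intro mult_right_mono) auto
    have eq: "sqrt \<bar>J k\<bar> * (sqrt \<bar>J k\<bar> * \<bar>x k\<bar>) = \<bar>J k\<bar> * \<bar>x k\<bar>"
      by (simp add: mult.assoc[symmetric])
    show "\<bar>A k * x k\<bar> \<le> sqrt \<bar>J k\<bar> * (sqrt \<bar>J k\<bar> * \<bar>x k\<bar>)" unfolding eq abs_mult by (rule le)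
  qed
  finally have a: "\<bar>\<Sum>k<n. A k * x k\<bar> \<le> (\<Sum>k<n. sqrt \<bar>J k\<bar> * (sqrt \<bar>J k\<bar> * \<bar>x k\<bar>))" .
  have "(\<Sum>k<n. A k * x k)^2 = \<bar>\<Sum>k<n. A k * x k\<bar>^2" by simp
  also have "\<dots> \<le> (\<Sum>k<n. sqrt \<bar>J k\<bar> * (sqrt \<bar>J k\<bar> * \<bar>x k\<bar>))^2"
    by (rule power_mono[OF a]) simp
  also have "\<dots> \<le> (\<Sum>k<n. (sqrt \<bar>J k\<bar>)^2) * (\<Sum>k<n. (sqrt \<bar>J k\<bar> * \<bar>x k\<bar>)^2)"
    by (rule Cauchy_Schwarz_ineq_sum)
  also have "\<dots> = (\<Sum>k<n. \<bar>J k\<bar>) * (\<Sum>k<n. \<bar>J k\<bar> * (x k)^2)"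
    by (simp add: power_mult_distrib)
  also have "\<dots> \<le> R * (\<Sum>k<n. \<bar>J k\<bar> * (x k)^2)"
    by (rule mult_right_mono[OF assms(2)]) (simp add: sum_nonneg)
  finally show ?thesis .
qed

lemma opnorm_le:
  fixes A J :: "nat \<Rightarrow> nat \<Rightarrow> real"
  assumes AJ: "\<And>i k. i < n \<Longrightarrow> k < n \<Longrightarrow> \<bar>A i k\<bar> \<le> \<bar>J i k\<bar>"
    and sym: "\<And>i k. i < n \<Longrightarrow> k < n \<Longrightarrow> J i k = J k i"
    and row: "\<And>i. i < n \<Longrightarrow> (\<Sum>k<n. \<bar>J i k\<bar>) \<le> R" and R: "0 \<le> R"
  shows "opnorm22 n A \<le> R"
  unfolding opnorm22_def
proof (rule cSup_least)
  show "{sqrt (\<Sum>i<n. (\<Sum>k<n. A i k * x k)^2) | x. (\<Sum>k<n. (x k)^2) \<le> 1} \<noteq> {}"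
    by (rule ex_in_conv[THEN iffD1], rule exI[of _ "sqrt (\<Sum>i<n. (\<Sum>k<n. A i k * 0)^2)"]) 
       (rule CollectI, rule exI[of _ "\<lambda>_. 0"], simp)
next
  fix v assume "v \<in> {sqrt (\<Sum>i<n. (\<Sum>k<n. A i k * x k)^2) | x. (\<Sum>k<n. (x k)^2) \<le> 1}"
  then obtain x where v: "v = sqrt (\<Sum>i<n. (\<Sum>k<n. A i k * x k)^2)" and x: "(\<Sum>k<n. (x k)^2) \<le> 1" by blast
  have "(\<Sum>i<n. (\<Sum>k<n. A i k * x k)^2) \<le> (\<Sum>i<n. R * (\<Sum>k<n. \<bar>J i k\<bar> * (x k)^2))"
  proof (rule sum_mono)
    fix i assume i: "i \<in> {..<n}"
    show "(\<Sum>k<n. A i k * x k)^2 \<le> R * (\<Sum>k<n. \<bar>J i k\<bar> * (x k)^2)"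
      by (rule row_CS[of n "A i" "J i" R x]) (use i AJ row in auto)
  qed
  also have "\<dots> = R * (\<Sum>i<n. \<Sum>k<n. \<bar>J i k\<bar> * (x k)^2)"
    by (rule sum_distrib_left[symmetric])
  also have "(\<Sum>i<n. \<Sum>k<n. \<bar>J i k\<bar> * (x k)^2) = (\<Sum>k<n. \<Sum>i<n. \<bar>J i k\<bar> * (x k)^2)"
    by (rule sum.swap)
  also have "\<dots> = (\<Sum>k<n. (x k)^2 * (\<Sum>i<n. \<bar>J k i\<bar>))"
  proof (rule sum.cong[OF refl])
    fix k assume k: "k \<in> {..<n}"
    have "(\<Sum>i<n. \<bar>J i k\<bar> * (x k)^2) = (\<Sum>i<n. (x k)^2 * \<bar>J k i\<bar>)"
      by (rule sum.cong[OF refl]) (use k sym in auto)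
    then show "(\<Sum>i<n. \<bar>J i k\<bar> * (x k)^2) = (x k)^2 * (\<Sum>i<n. \<bar>J k i\<bar>)"
      by (simp only: sum_distrib_left)
  qed
  also have "R * (\<Sum>k<n. (x k)^2 * (\<Sum>i<n. \<bar>J k i\<bar>)) \<le> R * (\<Sum>k<n. (x k)^2 * R)"
  proof (rule mult_left_mono[OF sum_mono R])
    fix k assume k: "k \<in> {..<n}"
    show "(x k)^2 * (\<Sum>i<n. \<bar>J k i\<bar>) \<le> (x k)^2 * R"
      by (rule mult_left_mono) (use k row in auto)
  qed
  also have "\<dots> = R * R * (\<Sum>k<n. (x k)^2)" by (simp add: sum_distrib_left sum_distrib_right mult_ac)
  also have "\<dots> \<le> R * R * 1" by (intro mult_left_mono x) (simp add: R)
  finally have "(\<Sum>i<n. (\<Sum>k<n. A i k * x k)^2) \<le> R^2" by (simp add: power2_eq_square)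
  then have "v \<le> sqrt (R^2)" unfolding v by (rule real_sqrt_le_mono)
  then show "v \<le> R" using R by simp
qed

lemma norm11_row: "i < n \<Longrightarrow> (\<Sum>j<n. \<bar>J i j\<bar>) \<le> norm11 n J"
  unfolding norm11_def by (rule Max_ge) auto

lemma norm11_nonneg: "0 \<le> norm11 n J"
  unfolding norm11_def by (rule Max_ge) auto

lemma coupling_bound:
  assumes sym: "\<forall>i<n. \<forall>j<n. J i j = J j i" and diag: "\<forall>i<n. J i i = 0"
    and i: "i < n" and k: "k < n"
  shows "\<bar>coupling n J h i k\<bar> \<le> \<bar>J i k\<bar>"
proof (cases "i = k")
  case True then show ?thesis by (simp add: coupling_def)
next
  case False
  define S where "S = {dTV_pm (cond_law n J h i x) (cond_law n J h i z) | x z.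
             x \<in> configs n \<and> z \<in> configs n \<and> (\<forall>j. j \<noteq> k \<longrightarrow> x j = z j)}"
  have cS: "coupling n J h i k = Sup S" unfolding coupling_def S_def using False by simp
  define x0 :: "nat \<Rightarrow> real" where "x0 = (\<lambda>j. if j < n then 1 else 0)"
  have x0: "x0 \<in> configs n" unfolding x0_def by (rule configs_ne)
  have d0: "dTV_pm (cond_law n J h i x0) (cond_law n J h i x0) \<in> S"
    unfolding S_def using x0 by blast
  have d00: "dTV_pm (cond_law n J h i x0) (cond_law n J h i x0) = 0" by (simp add: dTV_pm_def)
  have ub: "\<forall>d\<in>S. d \<le> \<bar>J i k\<bar>"
  proof
    fix d assume "d \<in> S"
    then obtain x z where d: "d = dTV_pm (cond_law n J h i x) (cond_law n J h i z)"
      and xz: "x \<in> configs n" "z \<in> configs n" "\<forall>j. j \<noteq> k \<longrightarrow> x j = z j"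
      unfolding S_def by blast
    have Jii: "J i i = 0" using diag i by blast
    have Jb: "\<And>b. b < n \<Longrightarrow> J b i = J i b" using sym i by metis
    show "d \<le> \<bar>J i k\<bar>" unfolding d
      by (rule dTV_bound[of i n J k x z h, OF i Jii Jb k _ xz]) (use False in auto)
  qed
  have le: "Sup S \<le> \<bar>J i k\<bar>" using d0 ub by (intro cSup_least) auto
  have ge: "0 \<le> Sup S"
  proof -
    have "bdd_above S" using ub by (auto simp: bdd_above_def)
    from cSup_upper[OF d0 this] show ?thesis using d00 by simp
  qed
  show ?thesis unfolding cS using le ge by simp
qed

lemma logi_q: "exp m / (exp m + exp (- m)) = 1 / (1 + exp (-2 * m))" for m :: real
proof -
  have "exp m + exp (- m) = exp m * (1 + exp (-2 * m))"
    by (simp add: distrib_left exp_add[symmetric])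
  then show ?thesis by simp
qed

lemma q_lower:
  fixes m K :: real assumes "\<bar>m\<bar> \<le> K"
  shows "exp (-2 * K) / 4 < 1 / (1 + exp (-2 * m))"
proof -
  have K: "0 \<le> K" using assms by simp
  have e1: "exp (-2 * m) \<le> exp (2 * K)" using assms by simp
  have e2: "1 \<le> exp (2 * K)" using K by simp
  have a: "1 + exp (-2 * m) < 4 * exp (2 * K)" using e1 e2 by linarith
  have "exp (-2 * K) / 4 = 1 / (4 * exp (2 * K))" by (simp add: exp_minus field_simps)
  also have "\<dots> < 1 / (1 + exp (-2 * m))"
  proof (rule divide_strict_left_mono[OF a])
    have p1: "0 < 1 + exp (-2 * m)" by (simp add: add_pos_pos)
    have p2: "0 < 4 * exp (2 * K)" by simp
    show "0 < 4 * exp (2 * K) * (1 + exp (-2 * m))" by (rule mult_pos_pos[OF p2 p1])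
  qed simp
  finally show ?thesis .
qed

lemma logi_bounds:
  fixes m K s :: real assumes "\<bar>m\<bar> \<le> K" "s \<in> {1, -1}"
  shows "exp (-2 * K) / 4 < exp (s * m) / (exp m + exp (- m)) \<and>
         exp (s * m) / (exp m + exp (- m)) < 1 - exp (-2 * K) / 4"
proof -
  have D: "exp m + exp (- m) > 0" by (simp add: add_pos_pos)
  have sum1: "exp (s * m) / (exp m + exp (- m)) + exp (- s * m) / (exp m + exp (- m)) = 1"
    using assms(2) D by (auto simp: add_divide_distrib[symmetric])
  have gen: "exp (-2 * K) / 4 < exp (t * m) / (exp m + exp (- m))" if t: "t \<in> {1, -1}" for t
  proof (cases "t = 1")
    case True then show ?thesis using logi_q[of m] q_lower[OF assms(1)] by simp
  next
    case False
    then have t1: "t = -1" using t by simp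
    have "exp (-m) / (exp (-m) + exp (- (-m))) = 1 / (1 + exp (-2 * (-m)))" by (rule logi_q)
    moreover have "\<bar>-m\<bar> \<le> K" using assms(1) by simp
    ultimately show ?thesis using q_lower[of "-m" K] t1 by (simp add: add.commute)
  qed
  have "exp (-2 * K) / 4 < exp (s * m) / (exp m + exp (- m))" using gen[OF assms(2)] .
  moreover have "exp (-2 * K) / 4 < exp (- s * m) / (exp m + exp (- m))"
    using gen[of "-s"] assms(2) by auto
  ultimately show ?thesis using sum1 by linarith
qed

lemma mf_bound:
  assumes "\<sigma> \<in> configs n"
  shows "\<bar>mf n J h i \<sigma>\<bar> \<le> (\<Sum>j<n. \<bar>J i j\<bar>) + \<bar>h i\<bar>"
proof -
  have "\<bar>\<Sum>b\<in>{..<n}-{i}. J i b * \<sigma> b\<bar> \<le> (\<Sum>b\<in>{..<n}-{i}. \<bar>J i b * \<sigma> b\<bar>)" by (rule sum_abs)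
  also have "\<dots> \<le> (\<Sum>b\<in>{..<n}-{i}. \<bar>J i b\<bar>)"
  proof (rule sum_mono)
    fix b show "\<bar>J i b * \<sigma> b\<bar> \<le> \<bar>J i b\<bar>"
      using configs_abs[OF assms, of b] by (simp add: abs_mult mult_left_le)
  qed
  also have "\<dots> \<le> (\<Sum>j<n. \<bar>J i j\<bar>)" by (rule sum_mono2) auto
  finally show ?thesis unfolding mf_def by linarith
qed

theorem lemma3p1:
  fixes \<alpha> :: real
  assumes "0 < \<alpha>" and "\<alpha> \<le> 1"
  shows "(\<forall>n J h.
            (\<forall>i<n. \<forall>j<n. J i j = J j i) \<and> (\<forall>i<n. J i i = 0) \<and> norm11 n J \<le> 1 - \<alpha>
            \<longrightarrow> opnorm22 n (coupling n J h) \<le> norm11 n J \<and> norm11 n J \<le> 1 - \<alpha>)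
       \<and> (\<forall>\<alpha>'::real. \<alpha>' \<ge> 0 \<longrightarrow>
            (\<exists>c C. c > 0 \<and> C > 0 \<and>
              (\<forall>n J h.
                 (\<forall>i<n. \<forall>j<n. J i j = J j i) \<and> (\<forall>i<n. J i i = 0) \<and> norm11 n J \<le> 1 - \<alpha>
                 \<and> (\<forall>i<n. \<bar>h i\<bar> \<le> \<alpha>')
                 \<longrightarrow> (\<forall>i<n. \<forall>\<sigma>\<in>configs n. \<forall>s\<in>{1, -1}.
                        c < cond_law n J h i \<sigma> s \<and> cond_law n J h i \<sigma> s < 1 - C))))"
proof (rule conjI)
  show "\<forall>n J h.
            (\<forall>i<n. \<forall>j<n. J i j = J j i) \<and> (\<forall>i<n. J i i = 0) \<and> norm11 n J \<le> 1 - \<alpha>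
            \<longrightarrow> opnorm22 n (coupling n J h) \<le> norm11 n J \<and> norm11 n J \<le> 1 - \<alpha>"
  proof (intro allI impI)
    fix n and J :: "nat \<Rightarrow> nat \<Rightarrow> real" and h :: "nat \<Rightarrow> real"
    assume H: "(\<forall>i<n. \<forall>j<n. J i j = J j i) \<and> (\<forall>i<n. J i i = 0) \<and> norm11 n J \<le> 1 - \<alpha>"
    have sym: "\<forall>i<n. \<forall>j<n. J i j = J j i" and diag: "\<forall>i<n. J i i = 0" and nb: "norm11 n J \<le> 1 - \<alpha>"
      using H by auto
    have "opnorm22 n (coupling n J h) \<le> norm11 n J"
    proof (rule opnorm_le[where J = J])
      fix i k assume "i < n" "k < n"
      then show "\<bar>coupling n J h i k\<bar> \<le> \<bar>J i k\<bar>" by (rule coupling_bound[OF sym diag])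
    next
      fix i k assume "i < n" "k < n"
      then show "J i k = J k i" using sym by blast
    next
      fix i assume "i < n" then show "(\<Sum>k<n. \<bar>J i k\<bar>) \<le> norm11 n J" by (rule norm11_row)
    qed (rule norm11_nonneg)
    then show "opnorm22 n (coupling n J h) \<le> norm11 n J \<and> norm11 n J \<le> 1 - \<alpha>" using nb by blast
  qed
next
  show "\<forall>\<alpha>'::real. \<alpha>' \<ge> 0 \<longrightarrow>
            (\<exists>c C. c > 0 \<and> C > 0 \<and>
              (\<forall>n J h.
                 (\<forall>i<n. \<forall>j<n. J i j = J j i) \<and> (\<forall>i<n. J i i = 0) \<and> norm11 n J \<le> 1 - \<alpha>
                 \<and> (\<forall>i<n. \<bar>h i\<bar> \<le> \<alpha>')
                 \<longrightarrow> (\<forall>i<n. \<forall>\<sigma>\<in>configs n. \<forall>s\<in>{1, -1}.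
                        c < cond_law n J h i \<sigma> s \<and> cond_law n J h i \<sigma> s < 1 - C)))"
  proof (intro allI impI)
    fix \<alpha>' :: real assume a': "\<alpha>' \<ge> 0"
    define c where "c = exp (-2 * (1 + \<alpha>')) / 4"
    have cpos: "c > 0" unfolding c_def by simp
    have main: "\<forall>n J h.
                 (\<forall>i<n. \<forall>j<n. J i j = J j i) \<and> (\<forall>i<n. J i i = 0) \<and> norm11 n J \<le> 1 - \<alpha>
                 \<and> (\<forall>i<n. \<bar>h i\<bar> \<le> \<alpha>')
                 \<longrightarrow> (\<forall>i<n. \<forall>\<sigma>\<in>configs n. \<forall>s\<in>{1, -1}.
                        c < cond_law n J h i \<sigma> s \<and> cond_law n J h i \<sigma> s < 1 - c)"
    proof (intro allI impI ballI)
      fix n and J :: "nat \<Rightarrow> nat \<Rightarrow> real" and h :: "nat \<Rightarrow> real" and i \<sigma> and s :: real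
      assume H: "(\<forall>i<n. \<forall>j<n. J i j = J j i) \<and> (\<forall>i<n. J i i = 0) \<and> norm11 n J \<le> 1 - \<alpha>
                 \<and> (\<forall>i<n. \<bar>h i\<bar> \<le> \<alpha>')"
        and i: "i < n" and \<sigma>: "\<sigma> \<in> configs n" and s: "s \<in> {1, -1}"
      have sym: "\<forall>i<n. \<forall>j<n. J i j = J j i" and diag: "\<forall>i<n. J i i = 0"
        and nb: "norm11 n J \<le> 1 - \<alpha>" and hb: "\<forall>i<n. \<bar>h i\<bar> \<le> \<alpha>'"
        using H by auto
      have Jii: "J i i = 0" using diag i by blast
      have Jb: "\<And>b. b < n \<Longrightarrow> J b i = J i b" using sym i by metis
      have eq: "cond_law n J h i \<sigma> s = exp (s * mf n J h i \<sigma>) / (exp (mf n J h i \<sigma>) + exp (- mf n J h i \<sigma>))"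
        by (rule cond_law_eq[of i n J h, OF i Jii Jb])
      have "\<bar>mf n J h i \<sigma>\<bar> \<le> (\<Sum>j<n. \<bar>J i j\<bar>) + \<bar>h i\<bar>" by (rule mf_bound[OF \<sigma>])
      moreover have "(\<Sum>j<n. \<bar>J i j\<bar>) \<le> norm11 n J" by (rule norm11_row[OF i])
      moreover have "\<bar>h i\<bar> \<le> \<alpha>'" using hb i by blast
      ultimately have mb: "\<bar>mf n J h i \<sigma>\<bar> \<le> 1 + \<alpha>'" using nb assms(1) by linarith
      show "c < cond_law n J h i \<sigma> s \<and> cond_law n J h i \<sigma> s < 1 - c"
        unfolding eq c_def by (rule logi_bounds[OF mb s])
    qed
    show "\<exists>c C. c > 0 \<and> C > 0 \<and>
              (\<forall>n J h.
                 (\<forall>i<n. \<forall>j<n. J i j = J j i) \<and> (\<forall>i<n. J i i = 0) \<and> norm11 n J \<le> 1 - \<alpha>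
                 \<and> (\<forall>i<n. \<bar>h i\<bar> \<le> \<alpha>')
                 \<longrightarrow> (\<forall>i<n. \<forall>\<sigma>\<in>configs n. \<forall>s\<in>{1, -1}.
                        c < cond_law n J h i \<sigma> s \<and> cond_law n J h i \<sigma> s < 1 - C))"
      using cpos main by blast
  qed
qed

end
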